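(* Let $(G,c)$ be an instance of min-cost 2ECSS and $(G',c')$ its inflation. For $x\in P_{EC}(G)$ define $x'\in\mathbb R^{E'}$ by $x'_{v'w'}=x_{vw}$ for each inter-clique edge $v'w'$ of $G'$ corresponding to the edge $vw$ of $G$, and $x'_{e'}=1$ for each $e'\in F'$. Then $x'\in P_{NC}(G')$ and $c'^{\top}x'=c^{\top}x$.
   Context: $G=(V,E)$ is a simple undirected graph with nonnegative edge costs $c\in\mathbb R_+^E$. $P_{EC}(G)=\{x\in\mathbb R^E: x(\delta_G(S))\ge 2\ \forall\,\emptyset\ne S\subsetneq V;\ 0\le x\le 1\}$ (the cut LP region for 2-edge connected spanning subgraphs), where $\delta_G(S)$ is the set of edges with exactly one end in $S$. Inflation: $G'=(V',E')$ is obtained by replacing each node $u$ of $G$ by a complete graph $C'_u$ on $\deg_G(u)$ new nodes (the $C'_u$ pairwise node-disjoint), and each edge $vw$ of $G$ by an edge $v'w'$ with $v'\in C'_v$, $w'\in C'_w$, such that each node of each $C'_u$ is incident to exactly one such inter-clique edge; costs: $c'_{v'w'}=c_{vw}$ and $c'_{e'}=0$ for every edge $e'$ in $F':=\bigcup_u E(C'_u)$. For a graph $H=(W,D)$ with nonnegative costs $d$, let $H^0=(W,\{e\in D: d_e=0\})$, and let $P_{NC}(H)$ (the partition LP region for 2NCSS) be the set of $x\in\mathbb R^D$ with $x(\delta_H(S))\ge 2$ for all $\emptyset\ne S\subsetneq W$, $0\le x\le 1$, and, for every node $w\in W$ and every partition $\mathcal P$ of $W\setminus\{w\}$ such that the node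 set of each connected component of $H^0-w$ is contained in a set of $\mathcal P$, $\sum_{e\in e_{H-w}(\mathcal P)}x_e\ge|\mathcal P|-1$, where $e_{H-w}(\mathcal P)$ is the set of edges of $H-w$ whose end nodes lie in different sets of $\mathcal P$. *)

theory Defs
  imports Complex_Main "HOL-Library.Disjoint_Sets"
begin

text \<open>Simple undirected graphs: a finite node set V and an edge set E of
  two-element subsets of V. Vectors in R^E are functions on edges (values
  outside E are irrelevant).\<close>

definition simple_graph :: "'a set \<Rightarrow> 'a set set \<Rightarrow> bool" where
  "simple_graph V E \<longleftrightarrow> finite V \<and> (\<forall>e\<in>E. \<exists>u v. u \<in> V \<and> v \<in> V \<and> u \<noteq> v \<and> e = {u, v})"

definition cut :: "'a set set \<Rightarrow> 'a set \<Rightarrow> 'a set set" where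
  "cut E S = {e \<in> E. card (e \<inter> S) = 1}"

definition P_EC :: "'a set \<Rightarrow> 'a set set \<Rightarrow> ('a set \<Rightarrow> real) set" where
  "P_EC V E = {x. (\<forall>S. S \<noteq> {} \<and> S \<subset> V \<longrightarrow> (\<Sum>e\<in>cut E S. x e) \<ge> 2)
                  \<and> (\<forall>e\<in>E. 0 \<le> x e \<and> x e \<le> 1)}"

definition reach0 :: "'b set set \<Rightarrow> ('b set \<Rightarrow> real) \<Rightarrow> 'b \<Rightarrow> 'b \<Rightarrow> 'b \<Rightarrow> bool" where
  "reach0 D d w a b \<longleftrightarrow>
     (a, b) \<in> {(p, q). {p, q} \<in> D \<and> d {p, q} = 0 \<and> p \<noteq> w \<and> q \<noteq> w}\<^sup>*"

definition comp0 :: "'b set \<Rightarrow> 'b set set \<Rightarrow> ('b set \<Rightarrow> real) \<Rightarrow> 'b \<Rightarrow> 'b \<Rightarrow> 'b set" where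
  "comp0 W D d w a = {b \<in> W - {w}. reach0 D d w a b}"

definition cross_edges :: "'b set set \<Rightarrow> 'b \<Rightarrow> 'b set set \<Rightarrow> 'b set set" where
  "cross_edges D w P = {e \<in> D. w \<notin> e \<and> \<not> (\<exists>X\<in>P. e \<subseteq> X)}"

definition P_NC :: "'b set \<Rightarrow> 'b set set \<Rightarrow> ('b set \<Rightarrow> real) \<Rightarrow> ('b set \<Rightarrow> real) set" where
  "P_NC W D d = {x. (\<forall>S. S \<noteq> {} \<and> S \<subset> W \<longrightarrow> (\<Sum>e\<in>cut D S. x e) \<ge> 2)
                  \<and> (\<forall>e\<in>D. 0 \<le> x e \<and> x e \<le> 1)
                  \<and> (\<forall>w\<in>W. \<forall>P. partition_on (W - {w}) P
                        \<and> (\<forall>a\<in>W - {w}. \<exists>X\<in>P. comp0 W D d w a \<subseteq> X)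
                        \<longrightarrow> (\<Sum>e\<in>cross_edges D w P. x e) \<ge> real (card P) - 1)}"

text \<open>The (canonical) inflation G' of G: node (u,e) of the clique C'_u
  corresponds to the edge e of G incident to u.\<close>
definition infl_V :: "'a set \<Rightarrow> 'a set set \<Rightarrow> ('a \<times> 'a set) set" where
  "infl_V V E = {(u, e). u \<in> V \<and> e \<in> E \<and> u \<in> e}"

definition infl_F :: "'a set \<Rightarrow> 'a set set \<Rightarrow> ('a \<times> 'a set) set set" where
  "infl_F V E = {{(u, e), (u, f)} | u e f. u \<in> V \<and> e \<in> E \<and> f \<in> E \<and> u \<in> e \<and> u \<in> f \<and> e \<noteq> f}"

definition infl_I :: "'a set set \<Rightarrow> ('a \<times> 'a set) set set" where
  "infl_I E = {{(v, e), (w, e)} | v w e. e \<in> E \<and> e = {v, w} \<and> v \<noteq> w}"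

definition infl_E :: "'a set \<Rightarrow> 'a set set \<Rightarrow> ('a \<times> 'a set) set set" where
  "infl_E V E = infl_F V E \<union> infl_I E"

definition orig_edge :: "('a \<times> 'a set) set \<Rightarrow> 'a set" where
  "orig_edge e' = the_elem (snd ` e')"

definition infl_cost :: "'a set \<Rightarrow> 'a set set \<Rightarrow> ('a set \<Rightarrow> real) \<Rightarrow> ('a \<times> 'a set) set \<Rightarrow> real" where
  "infl_cost V E c e' = (if e' \<in> infl_F V E then 0 else c (orig_edge e'))"

definition infl_vec :: "'a set \<Rightarrow> 'a set set \<Rightarrow> ('a set \<Rightarrow> real) \<Rightarrow> ('a \<times> 'a set) set \<Rightarrow> real" where
  "infl_vec V E x e' = (if e' \<in> infl_F V E then 1 else x (orig_edge e'))"

end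

theory Submission
  imports Defs
begin

definition ie :: "'a set \<Rightarrow> ('a \<times> 'a set) set" where
  "ie g = (\<lambda>u. (u, g)) ` g"

lemma ie_pair: "ie {p,q} = {(p,{p,q}),(q,{p,q})}" by (simp add: ie_def)

lemma card_pair_int: "a \<noteq> b \<Longrightarrow> card ({a,b} \<inter> S) = 1 \<longleftrightarrow> (a \<in> S) \<noteq> (b \<in> S)"
  by (cases "a \<in> S"; cases "b \<in> S") auto

locale infl_setting =
  fixes V :: "'a set" and E :: "'a set set" and c x :: "'a set \<Rightarrow> real"
  assumes sg: "simple_graph V E" and xP: "x \<in> P_EC V E"
begin

abbreviation "W \<equiv> infl_V V E"
abbreviation "D \<equiv> infl_E V E"
abbreviation "x' \<equiv> infl_vec V E x"
abbreviation "c' \<equiv> infl_cost V E c"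

lemma finV: "finite V" using sg by (simp add: simple_graph_def)
lemma E_two: "g \<in> E \<Longrightarrow> \<exists>p q. p \<in> V \<and> q \<in> V \<and> p \<noteq> q \<and> g = {p, q}"
  using sg by (auto simp: simple_graph_def)
lemma E_sub: "E \<subseteq> Pow V" using sg by (auto simp: simple_graph_def)
lemma finE: "finite E" using E_sub finV by (meson finite_Pow_iff finite_subset)
lemma W_sub: "W \<subseteq> V \<times> E" by (auto simp: infl_V_def)
lemma finW: "finite W" using W_sub finV finE by (meson finite_SigmaI finite_subset)
lemma D_sub: "D \<subseteq> Pow W" using E_sub
  by (auto simp: infl_E_def infl_F_def infl_I_def infl_V_def)
lemma finD: "finite D" using D_sub finW by (meson finite_Pow_iff finite_subset)
lemma xE: "g \<in> E \<Longrightarrow> 0 \<le> x g \<and> x g \<le> 1" using xP by (simp add: P_EC_def)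
lemma cutE: "S \<noteq> {} \<Longrightarrow> S \<subset> V \<Longrightarrow> (\<Sum>e\<in>cut E S. x e) \<ge> 2" using xP by (simp add: P_EC_def)

lemma I_eq: "infl_I E = ie ` E"
proof
  show "infl_I E \<subseteq> ie ` E"
  proof
    fix a assume "a \<in> infl_I E"
    then obtain v w e where "e \<in> E" "e = {v,w}" "a = {(v,e),(w,e)}" unfolding infl_I_def by blast
    then have "a = ie e" by (simp add: ie_pair)
    then show "a \<in> ie ` E" using \<open>e \<in> E\<close> by blast
  qed
  show "ie ` E \<subseteq> infl_I E"
  proof
    fix a assume "a \<in> ie ` E"
    then obtain g where g: "g \<in> E" "a = ie g" by auto
    then obtain p q where "p \<noteq> q" "g = {p,q}" using E_two by blast
    then show "a \<in> infl_I E" using g unfolding infl_I_def by (auto simp: ie_pair)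
  qed
qed

lemma ie_notF: "g \<in> E \<Longrightarrow> ie g \<notin> infl_F V E"
proof
  assume g: "g \<in> E" and F: "ie g \<in> infl_F V E"
  obtain p q where pq: "p \<noteq> q" "g = {p,q}" using E_two g by blast
  from F obtain u e f where ieq: "ie g = {(u,e),(u,f)}" unfolding infl_F_def mem_Collect_eq by metis
  have "p \<in> g" "q \<in> g" using pq(2) by simp_all
  then have "(p,g) \<in> ie g" "(q,g) \<in> ie g" unfolding ie_def by (auto intro: imageI)
  then have "(p,g) \<in> {(u,e),(u,f)}" "(q,g) \<in> {(u,e),(u,f)}" unfolding ieq .
  then have "p = u" "q = u" by auto
  then show False using pq(1) by simp
qed

lemma orig_ie: "g \<noteq> {} \<Longrightarrow> orig_edge (ie g) = g"
proof -
  assume "g \<noteq> {}"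
  have "snd ` ie g = (\<lambda>u. g) ` g" unfolding ie_def by (simp add: image_image)
  also have "\<dots> = {g}" using \<open>g \<noteq> {}\<close> by (simp add: image_constant_conv)
  finally have "snd ` ie g = {g}" .
  then show ?thesis by (simp add: orig_edge_def)
qed

lemma E_ne: "g \<in> E \<Longrightarrow> g \<noteq> {}" using E_two by blast

lemma x'_ie: "g \<in> E \<Longrightarrow> x' (ie g) = x g"
proof -
  assume g: "g \<in> E"
  have "ie g \<notin> infl_F V E" using ie_notF g .
  moreover have "orig_edge (ie g) = g" using orig_ie[OF E_ne[OF g]] .
  ultimately show ?thesis by (simp add: infl_vec_def)
qed
lemma c'_ie: "g \<in> E \<Longrightarrow> c' (ie g) = c g"
proof -
  assume g: "g \<in> E"
  have "ie g \<notin> infl_F V E" using ie_notF g .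
  moreover have "orig_edge (ie g) = g" using orig_ie[OF E_ne[OF g]] .
  ultimately show ?thesis by (simp add: infl_cost_def)
qed
lemma inj_ie: "inj_on ie E"
proof (rule inj_onI)
  fix a b assume a: "a \<in> E" and b: "b \<in> E" and ab: "ie a = ie b"
  have "a = orig_edge (ie a)" using orig_ie[OF E_ne[OF a]] by simp
  also have "\<dots> = orig_edge (ie b)" using ab by simp
  also have "\<dots> = b" using orig_ie[OF E_ne[OF b]] .
  finally show "a = b" .
qed

lemma FI_disj: "infl_F V E \<inter> ie ` E = {}" using ie_notF by auto

lemma x'_D: "g' \<in> D \<Longrightarrow> 0 \<le> x' g' \<and> x' g' \<le> 1"
proof -
  assume "g' \<in> D"
  then consider "g' \<in> infl_F V E" | g where "g \<in> E" "g' = ie g" unfolding infl_E_def I_eq by blast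
  then show ?thesis
  proof cases
    case 1 then show ?thesis by (simp add: infl_vec_def)
  next
    case 2 then show ?thesis using x'_ie xE by simp
  qed
qed

lemma ie_D: "g \<in> E \<Longrightarrow> ie g \<in> D" unfolding infl_E_def I_eq by auto

lemma sum_decomp:
  assumes "K \<subseteq> D"
  shows "(\<Sum>e\<in>K. x' e) = real (card (K \<inter> infl_F V E)) + (\<Sum>g\<in>{g\<in>E. ie g \<in> K}. x g)"
proof -
  have fK: "finite K" using assms finD finite_subset by blast
  have K: "K = (K \<inter> infl_F V E) \<union> (K \<inter> ie ` E)" using assms unfolding infl_E_def I_eq by auto
  have "(\<Sum>e\<in>K. x' e) = (\<Sum>e\<in>K \<inter> infl_F V E. x' e) + (\<Sum>e\<in>K \<inter> ie ` E. x' e)"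
    using FI_disj fK by (subst K, subst sum.union_disjoint) auto
  moreover have "(\<Sum>e\<in>K \<inter> infl_F V E. x' e) = real (card (K \<inter> infl_F V E))"
    by (simp add: infl_vec_def)
  moreover have "K \<inter> ie ` E = ie ` {g\<in>E. ie g \<in> K}" by auto
  moreover have "(\<Sum>e\<in>ie ` {g\<in>E. ie g \<in> K}. x' e) = (\<Sum>g\<in>{g\<in>E. ie g \<in> K}. x g)"
    using inj_ie x'_ie by (subst sum.reindex) (auto intro: inj_on_subset)
  ultimately show ?thesis by simp
qed

lemma cost_eq: "(\<Sum>e'\<in>D. c' e' * x' e') = (\<Sum>e\<in>E. c e * x e)"
proof -
  have D: "D = infl_F V E \<union> ie ` E" unfolding infl_E_def I_eq ..
  have finF: "finite (infl_F V E)" using finD unfolding infl_E_def by simp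
  have finI: "finite (ie ` E)" using finE by simp
  have "(\<Sum>e'\<in>D. c' e' * x' e') = (\<Sum>e'\<in>infl_F V E. c' e' * x' e') + (\<Sum>e'\<in>ie ` E. c' e' * x' e')"
    unfolding D using finF finI FI_disj by (rule sum.union_disjoint)
  moreover have "(\<Sum>e'\<in>infl_F V E. c' e' * x' e') = 0" by (simp add: infl_cost_def)
  moreover have "(\<Sum>e'\<in>ie ` E. c' e' * x' e') = (\<Sum>e\<in>E. c e * x e)"
    using inj_ie x'_ie c'_ie by (simp add: sum.reindex)
  ultimately show ?thesis by simp
qed

lemma cut_ineq:
  assumes S'W: "S' \<subseteq> W" and T_sub: "T \<subseteq> V"
    and Tin: "\<And>r. r \<in> V \<Longrightarrow> (\<forall>h. (r,h) \<in> W \<longrightarrow> (r,h) \<in> S') \<Longrightarrow> r \<in> T"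
    and Tmeet: "\<And>r h. r \<in> T \<Longrightarrow> (r,h) \<in> W \<Longrightarrow> (r,h) \<notin> S' \<Longrightarrow> \<exists>h. (r,h) \<in> S'"
  shows "(\<Sum>e\<in>cut E T. x e) \<le> (\<Sum>e\<in>cut D S'. x' e)"
proof -
  define CI where "CI = {g\<in>E. ie g \<in> cut D S'}"
  define CF where "CF = cut D S' \<inter> infl_F V E"
  have cutD_sub: "cut D S' \<subseteq> D" by (auto simp: cut_def)
  have dec: "(\<Sum>e\<in>cut D S'. x' e) = real (card CF) + (\<Sum>g\<in>CI. x g)"
    unfolding CF_def CI_def by (rule sum_decomp[OF cutD_sub])
  define B where "B = {(r,g). g \<in> cut E T \<and> g \<notin> CI \<and> r \<in> g \<and> ((r,g) \<in> S') \<noteq> (r \<in> T)}"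
  define h0 where "h0 r = (SOME h. (r,h) \<in> W \<and> (((r,h) \<in> S') = (r \<in> T)))" for r
  define f where "f = (\<lambda>(r,g). {(r,g),(r,h0 r)})"
  have cutE_sub: "cut E T \<subseteq> E" by (auto simp: cut_def)
  have finB: "finite B"
  proof (rule finite_subset)
    show "B \<subseteq> V \<times> E" unfolding B_def using cutE_sub E_sub by auto
    show "finite (V \<times> E)" using finV finE by blast
  qed
  have h0: "(r, h0 r) \<in> W \<and> (((r,h0 r) \<in> S') = (r \<in> T))" if rg: "(r,g) \<in> B" for r g
  proof -
    from rg have g: "g \<in> E" "r \<in> g" "((r,g) \<in> S') \<noteq> (r \<in> T)" unfolding B_def using cutE_sub by auto
    have rV: "r \<in> V" using g E_sub by auto
    have rgW: "(r,g) \<in> W" using g rV by (simp add: infl_V_def)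
    have "\<exists>h. (r,h) \<in> W \<and> (((r,h) \<in> S') = (r \<in> T))"
    proof (cases "r \<in> T")
      case True
      then have "(r,g) \<notin> S'" using g by auto
      then obtain h where "(r,h) \<in> S'" using Tmeet True rgW by blast
      then show ?thesis using True S'W by blast
    next
      case False
      then have "\<not> (\<forall>h. (r,h) \<in> W \<longrightarrow> (r,h) \<in> S')" using Tin rV by blast
      then show ?thesis using False by blast
    qed
    then show ?thesis unfolding h0_def by (rule someI_ex)
  qed
  have fCF: "f ` B \<subseteq> CF"
  proof
    fix a assume "a \<in> f ` B"
    then obtain r g where rg: "(r,g) \<in> B" and a: "a = {(r,g),(r,h0 r)}" unfolding f_def by auto
    from rg have g: "g \<in> E" "r \<in> g" "((r,g) \<in> S') \<noteq> (r \<in> T)" unfolding B_def using cutE_sub by auto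
    have rV: "r \<in> V" using g E_sub by auto
    have hh: "(r, h0 r) \<in> W" "((r,h0 r) \<in> S') = (r \<in> T)" using h0[OF rg] by auto
    have ne: "g \<noteq> h0 r" using g hh by auto
    have "a \<in> infl_F V E" unfolding a infl_F_def using rV g hh ne by (auto simp: infl_V_def)
    moreover have "card (a \<inter> S') = 1" unfolding a using card_pair_int[of "(r,g)" "(r,h0 r)" S'] ne g hh by auto
    ultimately show "a \<in> CF" unfolding CF_def cut_def infl_E_def by auto
  qed
  have injf: "inj_on f B"
  proof (rule inj_onI)
    fix a b assume a: "a \<in> B" and b: "b \<in> B" and fab: "f a = f b"
    obtain r g where ra: "a = (r,g)" by fastforce
    obtain s h where sb: "b = (s,h)" by fastforce
    have ne1: "g \<noteq> h0 r" using a h0[of r g] unfolding ra B_def by auto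
    have ne2: "h \<noteq> h0 s" using b h0[of s h] unfolding sb B_def by auto
    from fab have "{(r,g),(r,h0 r)} = {(s,h),(s,h0 s)}" unfolding f_def ra sb by simp
    then have "r = s" by (metis doubleton_eq_iff fst_conv)
    with fab ne1 ne2 show "a = b" unfolding f_def ra sb by (auto simp: doubleton_eq_iff)
  qed
  have cover: "cut E T - CI \<subseteq> snd ` B"
  proof
    fix g assume g: "g \<in> cut E T - CI"
    then have gE: "g \<in> E" and c1: "card (g \<inter> T) = 1" and nCI: "g \<notin> CI" by (auto simp: cut_def)
    obtain p q where pq: "p \<noteq> q" "g = {p,q}" using E_two gE by blast
    have pT: "(p \<in> T) \<noteq> (q \<in> T)" using c1 card_pair_int[OF pq(1)] pq(2) by simp
    have "ie g \<notin> cut D S'" using nCI gE unfolding CI_def by auto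
    then have "card (ie g \<inter> S') \<noteq> 1" using ie_D[OF gE] by (auto simp: cut_def)
    then have pS: "((p,g) \<in> S') = ((q,g) \<in> S')"
      using card_pair_int[of "(p,g)" "(q,g)" S'] pq by (auto simp: ie_pair)
    have "(p,g) \<in> B \<or> (q,g) \<in> B" using g pq pT pS unfolding B_def by auto
    then show "g \<in> snd ` B" by force
  qed
  have finCF: "finite CF" unfolding CF_def using finD cutD_sub finite_subset by blast
  have "card (cut E T - CI) \<le> card B" using cover finB
    by (meson card_image_le card_mono finite_imageI order_trans)
  also have "card B \<le> card CF" using card_inj_on_le[OF injf fCF finCF] .
  finally have cardle: "card (cut E T - CI) \<le> card CF" .
  have finCT: "finite (cut E T)" using cutE_sub finE finite_subset by blast
  have "(\<Sum>e\<in>cut E T - CI. x e) \<le> (\<Sum>e\<in>cut E T - CI. 1)"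
    by (rule sum_mono) (use xE cutE_sub in auto)
  also have "\<dots> = real (card (cut E T - CI))" by simp
  also have "\<dots> \<le> real (card CF)" using cardle by simp
  finally have s1: "(\<Sum>e\<in>cut E T - CI. x e) \<le> real (card CF)" .
  have s2: "(\<Sum>e\<in>cut E T \<inter> CI. x e) \<le> (\<Sum>e\<in>CI. x e)"
    by (rule sum_mono2) (use finE xE in \<open>auto simp: CI_def\<close>)
  have "(\<Sum>e\<in>cut E T. x e) = (\<Sum>e\<in>cut E T \<inter> CI. x e) + (\<Sum>e\<in>cut E T - CI. x e)"
    using finCT by (metis sum.Int_Diff)
  then show ?thesis using s1 s2 dec by linarith
qed

lemma cut_G':
  assumes ne: "S' \<noteq> {}" and ps: "S' \<subset> W"
  shows "(\<Sum>e\<in>cut D S'. x' e) \<ge> 2"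
proof -
  have S'W: "S' \<subseteq> W" using ps by auto
  have uv: "\<exists>u v. u \<noteq> v \<and> (\<exists>h. (u,h) \<in> S') \<and> (\<exists>h. (v,h) \<in> W - S')"
  proof -
    obtain a e where p: "(a,e) \<in> S'" using ne by auto
    obtain b f where q: "(b,f) \<in> W - S'" using ps by auto
    show ?thesis
    proof (cases "a = b")
      case False then show ?thesis using p q by blast
    next
      case True
      have eE: "e \<in> E" "a \<in> e" using p S'W by (auto simp: infl_V_def)
      obtain p1 q1 where pq: "p1 \<noteq> q1" "e = {p1,q1}" using E_two eE(1) by blast
      then obtain b' where b': "b' \<in> e" "b' \<noteq> a" using eE by blast
      have "(b',e) \<in> W" using b' eE E_sub by (auto simp: infl_V_def)
      show ?thesis
      proof (cases "(b',e) \<in> S'")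
        case True2: True
        have "(a,f) \<in> W - S'" using q True by simp
        then show ?thesis using True2 b'(2) by (intro exI[of _ b'] exI[of _ a]) auto
      next
        case False
        then have "(b',e) \<in> W - S'" using \<open>(b',e) \<in> W\<close> by simp
        then show ?thesis using p b'(2) by (intro exI[of _ a] exI[of _ b']) auto
      qed
    qed
  qed
  then obtain u v where uv: "u \<noteq> v" "\<exists>h. (u,h) \<in> S'" "\<exists>h. (v,h) \<in> W - S'" by blast
  define T where "T = {r\<in>V. \<forall>h. (r,h) \<in> W \<longrightarrow> (r,h) \<in> S'} \<union> {u}"
  have uV: "u \<in> V" using uv(2) S'W by (auto simp: infl_V_def)
  have vV: "v \<in> V" using uv(3) by (auto simp: infl_V_def)
  have vT: "v \<notin> T" using uv unfolding T_def by auto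
  have TV: "T \<subseteq> V" using uV unfolding T_def by auto
  have le: "(\<Sum>e\<in>cut E T. x e) \<le> (\<Sum>e\<in>cut D S'. x' e)"
  proof (rule cut_ineq[OF S'W TV])
    show "\<And>r. r \<in> V \<Longrightarrow> \<forall>h. (r, h) \<in> W \<longrightarrow> (r, h) \<in> S' \<Longrightarrow> r \<in> T" unfolding T_def by auto
    show "\<And>r h. r \<in> T \<Longrightarrow> (r, h) \<in> W \<Longrightarrow> (r, h) \<notin> S' \<Longrightarrow> \<exists>h. (r, h) \<in> S'"
      using uv(2) unfolding T_def by auto
  qed
  have "2 \<le> (\<Sum>e\<in>cut E T. x e)" using cutE[of T] TV vT vV unfolding T_def by auto
  then show ?thesis using le by linarith
qed

lemma part_G':
  assumes w: "w \<in> W" and P: "partition_on (W - {w}) P"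
    and comp: "\<forall>a\<in>W - {w}. \<exists>X\<in>P. comp0 W D c' w a \<subseteq> X"
  shows "(\<Sum>e\<in>cross_edges D w P. x' e) \<ge> real (card P) - 1"
proof -
  have cross_sub: "cross_edges D w P \<subseteq> D" by (auto simp: cross_edges_def)
  have finC: "finite (cross_edges D w P)" using cross_sub finD finite_subset by blast
  have nn: "0 \<le> (\<Sum>e\<in>cross_edges D w P. x' e)"
    by (rule sum_nonneg) (use x'_D cross_sub in auto)
  show ?thesis
  proof (cases "card P \<le> 1")
    case True then show ?thesis using nn by simp
  next
    case False
    have UP: "\<Union>P = W - {w}" using partition_onD1[OF P] by simp
    have disj: "disjoint P" using partition_onD2[OF P] .
    have nemp: "{} \<notin> P" using partition_onD3[OF P] .
    have finP: "finite P"
    proof (rule finite_subset)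
      show "P \<subseteq> Pow W" using UP by auto
      show "finite (Pow W)" using finW by simp
    qed
    have uniq: "X = Y" if "X \<in> P" "Y \<in> P" "z \<in> X" "z \<in> Y" for X Y z
      using disj that unfolding disjoint_def by blast
    have same: "\<exists>X\<in>P. a \<in> X \<and> b \<in> X" if a: "a \<in> W - {w}" and b: "b \<in> W - {w}"
      and fab: "fst a = fst b" for a b
    proof -
      obtain X where X: "X \<in> P" "comp0 W D c' w a \<subseteq> X" using comp a by blast
      have "reach0 D c' w a b"
      proof (cases "a = b")
        case True then show ?thesis by (simp add: reach0_def)
      next
        case False
        obtain r g where ra: "a = (r,g)" by fastforce
        obtain h where rb: "b = (r,h)" using fab ra by (metis fst_conv prod.collapse)
        have gh: "g \<noteq> h" using False ra rb by simp
        have inF: "{a,b} \<in> infl_F V E" using a b gh unfolding ra rb infl_F_def infl_V_def by auto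
        then have "{a,b} \<in> D" "c' {a,b} = 0" by (auto simp: infl_E_def infl_cost_def)
        then show ?thesis using a b unfolding reach0_def by (intro r_into_rtrancl) auto
      qed
      then have "b \<in> comp0 W D c' w a" using b by (simp add: comp0_def)
      moreover have "a \<in> comp0 W D c' w a" using a by (simp add: comp0_def reach0_def)
      ultimately show ?thesis using X by blast
    qed
    define T where "T X = fst ` X" for X :: "('a \<times> 'a set) set"
    have XW: "X \<subseteq> W - {w}" if "X \<in> P" for X using UP that by blast
    have memb: "(r,g) \<in> X" if X: "X \<in> P" and r: "r \<in> T X" and rg: "(r,g) \<in> W" "(r,g) \<noteq> w" for X r g
    proof -
      obtain a where a: "a \<in> X" "fst a = r" using r unfolding T_def by blast
      obtain Y where Y: "Y \<in> P" "a \<in> Y" "(r,g) \<in> Y" using same[of a "(r,g)"] a XW[OF X] rg by auto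
      then show ?thesis using uniq[OF X Y(1) a(1) Y(2)] by simp
    qed
    have Tdisj: "T X \<inter> T Y = {}" if X: "X \<in> P" and Y: "Y \<in> P" and XY: "X \<noteq> Y" for X Y
    proof (rule ccontr)
      assume "T X \<inter> T Y \<noteq> {}"
      then obtain r where r: "r \<in> T X" "r \<in> T Y" by blast
      obtain b where b: "b \<in> Y" "fst b = r" using r(2) unfolding T_def by auto
      obtain g where bg: "b = (r,g)" using b by (metis prod.collapse)
      have "b \<in> X" using memb[OF X r(1), of g] XW[OF Y] b bg by auto
      then show False using uniq[OF X Y _ b(1)] XY by blast
    qed
    have TV: "T X \<subseteq> V" if "X \<in> P" for X using XW[OF that] unfolding T_def by (auto simp: infl_V_def)
    have Tne: "T X \<noteq> {}" if "X \<in> P" for X using nemp that unfolding T_def by auto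
    have Tps: "T X \<subset> V" if X: "X \<in> P" for X
    proof -
      have "\<not> P \<subseteq> {X}" using False card_mono[of "{X}" P] by auto
      then obtain Y where Y: "Y \<in> P" "Y \<noteq> X" by blast
      then show ?thesis using Tdisj[OF X Y(1)] Tne[OF Y(1)] TV[OF Y(1)] TV[OF X] by blast
    qed
    have cut2: "2 \<le> (\<Sum>e\<in>cut E (T X). x e)" if "X \<in> P" for X
      using cutE Tne[OF that] Tps[OF that] by blast
    define e0 where "e0 = snd w"
    have e0E: "e0 \<in> E" using w unfolding e0_def by (auto simp: infl_V_def)
    define CE where "CE = {g\<in>E. ie g \<in> cross_edges D w P}"
    define C0 where "C0 = insert e0 CE"
    have finC0: "finite C0" unfolding C0_def CE_def using finE by auto
    have C0E: "C0 \<subseteq> E" unfolding C0_def CE_def using e0E by auto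
    have cutC0: "cut E (T X) \<subseteq> C0" if X: "X \<in> P" for X
    proof
      fix g assume g: "g \<in> cut E (T X)"
      then have gE: "g \<in> E" and c1: "card (g \<inter> T X) = 1" by (auto simp: cut_def)
      obtain p0 q0 where pq0: "p0 \<noteq> q0" "g = {p0,q0}" using E_two gE by blast
      have "(p0 \<in> T X) \<noteq> (q0 \<in> T X)" using c1 card_pair_int[OF pq0(1)] pq0(2) by simp
      then obtain p q where pq: "g = {p,q}" "p \<in> T X" "q \<notin> T X"
        using pq0 by (metis insert_commute)
      show "g \<in> C0"
      proof (cases "g = e0")
        case True then show ?thesis by (simp add: C0_def)
      next
        case ne: False
        have wn: "w \<notin> ie g" using ne unfolding e0_def ie_def by auto
        have pgW: "(p,g) \<in> W" "(q,g) \<in> W" using pq gE E_sub by (auto simp: infl_V_def)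
        have pgX: "(p,g) \<in> X" using memb[OF X pq(2) pgW(1)] wn pq by (auto simp: ie_pair)
        have qgX: "(q,g) \<notin> X" using pq(3) unfolding T_def by force
        have "\<not> (\<exists>Z\<in>P. ie g \<subseteq> Z)"
        proof
          assume "\<exists>Z\<in>P. ie g \<subseteq> Z"
          then obtain Z where Z: "Z \<in> P" "(p,g) \<in> Z" "(q,g) \<in> Z" using pq by (auto simp: ie_pair)
          then show False using uniq[OF X Z(1) pgX Z(2)] qgX by simp
        qed
        then have "ie g \<in> cross_edges D w P" using ie_D[OF gE] wn by (simp add: cross_edges_def)
        then show ?thesis using gE by (simp add: C0_def CE_def)
      qed
    qed
    have cnt: "card {X\<in>P. g \<in> cut E (T X)} \<le> 2" if gE: "g \<in> E" for g
    proof -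
      obtain p q where pq: "g = {p,q}" using E_two gE by blast
      have sub: "{X\<in>P. g \<in> cut E (T X)} \<subseteq> {X\<in>P. p \<in> T X} \<union> {X\<in>P. q \<in> T X}"
      proof
        fix X assume "X \<in> {X\<in>P. g \<in> cut E (T X)}"
        then have "X \<in> P" "card (g \<inter> T X) = 1" by (auto simp: cut_def)
        then show "X \<in> {X\<in>P. p \<in> T X} \<union> {X\<in>P. q \<in> T X}" using pq by (cases "p \<in> T X"; cases "q \<in> T X") auto
      qed
      have one: "card {X\<in>P. r \<in> T X} \<le> 1" for r
      proof -
        have "\<forall>a1\<in>{X\<in>P. r \<in> T X}. \<forall>a2\<in>{X\<in>P. r \<in> T X}. a1 = a2" using Tdisj by blast
        then have "card {X\<in>P. r \<in> T X} \<le> Suc 0" using card_le_Suc0_iff_eq[of "{X\<in>P. r \<in> T X}"] finP by simp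
        then show ?thesis by simp
      qed
      have "card {X\<in>P. g \<in> cut E (T X)} \<le> card ({X\<in>P. p \<in> T X} \<union> {X\<in>P. q \<in> T X})"
        using sub finP by (intro card_mono) auto
      also have "\<dots> \<le> card {X\<in>P. p \<in> T X} + card {X\<in>P. q \<in> T X}" by (rule card_Un_le)
      finally show ?thesis using one[of p] one[of q] by linarith
    qed
    have "2 * real (card P) = (\<Sum>X\<in>P. 2)" by simp
    also have "\<dots> \<le> (\<Sum>X\<in>P. \<Sum>g\<in>cut E (T X). x g)" by (rule sum_mono) (use cut2 in auto)
    also have "\<dots> = (\<Sum>X\<in>P. \<Sum>g\<in>C0. if g \<in> cut E (T X) then x g else 0)"
    proof (rule sum.cong[OF refl])
      fix X assume X: "X \<in> P"
      have "C0 \<inter> cut E (T X) = cut E (T X)" using cutC0[OF X] by blast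
      then show "(\<Sum>g\<in>cut E (T X). x g) = (\<Sum>g\<in>C0. if g \<in> cut E (T X) then x g else 0)"
        using sum.inter_restrict[OF finC0, of x "cut E (T X)"] by simp
    qed
    also have "\<dots> = (\<Sum>g\<in>C0. \<Sum>X\<in>P. if g \<in> cut E (T X) then x g else 0)" by (rule sum.swap)
    also have "\<dots> \<le> (\<Sum>g\<in>C0. 2 * x g)"
    proof (rule sum_mono)
      fix g assume g: "g \<in> C0"
      then have gE: "g \<in> E" using C0E by blast
      have "(\<Sum>X\<in>P. if g \<in> cut E (T X) then x g else 0) = (\<Sum>X\<in>{X\<in>P. g \<in> cut E (T X)}. x g)"
        using sum.inter_restrict[OF finP, of "\<lambda>_. x g" "{X. g \<in> cut E (T X)}"]
        by (simp add: Int_def conj_commute)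
      also have "\<dots> = real (card {X\<in>P. g \<in> cut E (T X)}) * x g" by simp
      also have "\<dots> \<le> 2 * x g" using cnt[OF gE] xE[OF gE] by (intro mult_right_mono) auto
      finally show "(\<Sum>X\<in>P. if g \<in> cut E (T X) then x g else 0) \<le> 2 * x g" .
    qed
    also have "\<dots> = 2 * (\<Sum>g\<in>C0. x g)" by (simp add: sum_distrib_left)
    finally have A: "2 * real (card P) \<le> 2 * (\<Sum>g\<in>C0. x g)" .
    have finCE: "finite CE" unfolding CE_def using finE by auto
    have "(\<Sum>g\<in>C0. x g) \<le> x e0 + (\<Sum>g\<in>CE. x g)"
      unfolding C0_def using finCE xE by (simp add: sum.insert_if) (auto simp: CE_def)
    also have "\<dots> \<le> 1 + (\<Sum>g\<in>CE. x g)" using xE[OF e0E] by simp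
    finally have B: "(\<Sum>g\<in>C0. x g) \<le> 1 + (\<Sum>g\<in>CE. x g)" .
    have "(\<Sum>g\<in>CE. x g) = (\<Sum>e\<in>ie ` CE. x' e)"
      using inj_ie x'_ie by (subst sum.reindex) (auto intro: inj_on_subset simp: CE_def)
    also have "\<dots> \<le> (\<Sum>e\<in>cross_edges D w P. x' e)"
      by (rule sum_mono2[OF finC]) (use x'_D cross_sub in \<open>auto simp: CE_def\<close>)
    finally have C: "(\<Sum>g\<in>CE. x g) \<le> (\<Sum>e\<in>cross_edges D w P. x' e)" .
    show ?thesis using A B C by linarith
  qed
qed

end

theorem mainTheorem9:
  fixes V :: "'a set" and E :: "'a set set" and c x :: "'a set \<Rightarrow> real"
  assumes "simple_graph V E"
    and "\<forall>e\<in>E. c e \<ge> 0"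
    and "x \<in> P_EC V E"
  shows "infl_vec V E x \<in> P_NC (infl_V V E) (infl_E V E) (infl_cost V E c)
    \<and> (\<Sum>e'\<in>infl_E V E. infl_cost V E c e' * infl_vec V E x e') = (\<Sum>e\<in>E. c e * x e)"
proof -
  interpret infl_setting V E c x using assms(1,3) by unfold_locales
  have "infl_vec V E x \<in> P_NC (infl_V V E) (infl_E V E) (infl_cost V E c)"
    unfolding P_NC_def mem_Collect_eq
  proof (intro conjI allI impI ballI)
    fix S assume "S \<noteq> {} \<and> S \<subset> infl_V V E"
    then show "2 \<le> (\<Sum>e\<in>cut (infl_E V E) S. infl_vec V E x e)" using cut_G' by blast
  next
    fix e assume "e \<in> infl_E V E"
    then show "0 \<le> infl_vec V E x e" "infl_vec V E x e \<le> 1" using x'_D by auto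
  next
    fix w P assume "w \<in> infl_V V E"
      "partition_on (infl_V V E - {w}) P \<and> (\<forall>a\<in>infl_V V E - {w}. \<exists>X\<in>P. comp0 (infl_V V E) (infl_E V E) (infl_cost V E c) w a \<subseteq> X)"
    then show "real (card P) - 1 \<le> (\<Sum>e\<in>cross_edges (infl_E V E) w P. infl_vec V E x e)"
      using part_G' by blast
  qed
  then show ?thesis using cost_eq by (rule conjI)
qed

end
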